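(* Let $k\geq 2$ and $\ell\geq 2$ be integers. Let $G(k,\ell)$ be the graph obtained from the disjoint union of $\ell$ copies $K(1),\dots,K(\ell)$ of $K_{2k}$, where the vertex set of each $K(i)$ is partitioned into two sets $L(i)$ and $R(i)$ of size $k$, by adding, for every $i\in\{1,\dots,\ell\}$ (indices modulo $\ell$), a perfect matching $M(i)$ between $R(i)$ and $L(i+1)$. Let $G'(k,\ell)$ be obtained from $G(k,\ell)$ by adding, for every $i$ (indices modulo $\ell$), a further perfect matching between $R(i)$ and $L(i+1)$ that is edge-disjoint from $M(i)$. Then $G(k,\ell)$ is a connected $2k$-regular graph and $G'(k,\ell)$ is a connected $(2k+1)$-regular graph, and both satisfy $2\alpha=\mathrm{diss}$, i.e. $2\alpha(G(k,\ell))=\mathrm{diss}(G(k,\ell))=2\ell$ and $2\alpha(G'(k,\ell))=\mathrm{diss}(G'(k,\ell))=2\ell$.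
   Context: All graphs are finite, simple and undirected. $\alpha(G)$ is the independence number. A set $D$ of vertices is a dissociation set if the induced subgraph $G[D]$ has maximum degree at most $1$; $\mathrm{diss}(G)$ is the maximum order of a dissociation set. *)

theory Defs
  imports Main
begin

text \<open>A finite simple graph is given by a vertex set V and a symmetric irreflexive
adjacency relation E (only its restriction to V matters).\<close>

definition indep_set :: "'a set \<Rightarrow> ('a \<Rightarrow> 'a \<Rightarrow> bool) \<Rightarrow> 'a set \<Rightarrow> bool" where
  "indep_set V E S \<longleftrightarrow> S \<subseteq> V \<and> (\<forall>x\<in>S. \<forall>y\<in>S. \<not> E x y)"

definition dissoc_set :: "'a set \<Rightarrow> ('a \<Rightarrow> 'a \<Rightarrow> bool) \<Rightarrow> 'a set \<Rightarrow> bool" where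
  "dissoc_set V E D \<longleftrightarrow> D \<subseteq> V \<and> (\<forall>x\<in>D. card {y\<in>D. E x y} \<le> 1)"

definition alpha :: "'a set \<Rightarrow> ('a \<Rightarrow> 'a \<Rightarrow> bool) \<Rightarrow> nat" where
  "alpha V E = Max {card S | S. indep_set V E S}"

definition diss :: "'a set \<Rightarrow> ('a \<Rightarrow> 'a \<Rightarrow> bool) \<Rightarrow> nat" where
  "diss V E = Max {card D | D. dissoc_set V E D}"

definition regular :: "'a set \<Rightarrow> ('a \<Rightarrow> 'a \<Rightarrow> bool) \<Rightarrow> nat \<Rightarrow> bool" where
  "regular V E d \<longleftrightarrow> (\<forall>v\<in>V. card {u\<in>V. E v u} = d)"

definition connected_graph :: "'a set \<Rightarrow> ('a \<Rightarrow> 'a \<Rightarrow> bool) \<Rightarrow> bool" where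
  "connected_graph V E \<longleftrightarrow> V \<noteq> {} \<and>
     (\<forall>u\<in>V. \<forall>v\<in>V. (\<lambda>x y. x \<in> V \<and> y \<in> V \<and> E x y)\<^sup>*\<^sup>* u v)"

text \<open>Vertices of G(k,l): (i, s, j) with i < l the copy index, s = False for L(i),
 s = True for R(i), and j < k the position inside L(i) resp. R(i).\<close>

definition GV :: "nat \<Rightarrow> nat \<Rightarrow> (nat \<times> bool \<times> nat) set" where
  "GV k l = {(i, s, j). i < l \<and> j < k}"

definition clique_adj :: "nat \<times> bool \<times> nat \<Rightarrow> nat \<times> bool \<times> nat \<Rightarrow> bool" where
  "clique_adj u v \<longleftrightarrow> u \<noteq> v \<and> fst u = fst v"

text \<open>Matching edges given by bijections \<sigma> i : R(i) \<rightarrow> L(i+1 mod l): (i,R,j) -- (i+1 mod l, L, \<sigma> i j).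
 Symmetrised.\<close>
definition match_adj :: "nat \<Rightarrow> (nat \<Rightarrow> nat \<Rightarrow> nat) \<Rightarrow> nat \<times> bool \<times> nat \<Rightarrow> nat \<times> bool \<times> nat \<Rightarrow> bool" where
  "match_adj l \<sigma> u v \<longleftrightarrow>
     (\<exists>i j. u = (i, True, j) \<and> v = (Suc i mod l, False, \<sigma> i j)) \<or>
     (\<exists>i j. v = (i, True, j) \<and> u = (Suc i mod l, False, \<sigma> i j))"

definition G_adj :: "nat \<Rightarrow> (nat \<Rightarrow> nat \<Rightarrow> nat) \<Rightarrow> nat \<times> bool \<times> nat \<Rightarrow> nat \<times> bool \<times> nat \<Rightarrow> bool" where
  "G_adj l \<sigma> u v \<longleftrightarrow> clique_adj u v \<or> match_adj l \<sigma> u v"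

definition G'_adj :: "nat \<Rightarrow> (nat \<Rightarrow> nat \<Rightarrow> nat) \<Rightarrow> (nat \<Rightarrow> nat \<Rightarrow> nat) \<Rightarrow>
    nat \<times> bool \<times> nat \<Rightarrow> nat \<times> bool \<times> nat \<Rightarrow> bool" where
  "G'_adj l \<sigma> \<tau> u v \<longleftrightarrow> G_adj l \<sigma> u v \<or> match_adj l \<tau> u v"

end

theory Submission imports Defs begin

lemma GV_eq: "GV k l = {..<l} \<times> (UNIV \<times> {..<k})"
  by (auto simp: GV_def)

lemma finite_GV: "finite (GV k l)" by (simp add: GV_eq)

lemma pred_mod:
  assumes "a < l" "Suc a mod l = i" shows "a = (i + l - 1) mod l"
proof (cases "Suc a = l")
  case True then show ?thesis using assms by auto
next
  case False then have "i = Suc a" using assms by auto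
  then show ?thesis using assms by (simp add: mod_if)
qed

lemma suc_pred_mod: assumes "i < l" shows "Suc ((i + l - 1) mod l) mod l = i"
proof (cases "i = 0")
  case True then show ?thesis using assms by auto
next
  case False then have "(i + l - 1) mod l = i - 1" using assms by (simp add: mod_if)
  then show ?thesis using assms False by auto
qed

lemma mate_True:
  assumes "i < l" "j < k" "bij_betw (f i) {..<k} {..<k}"
  shows "{u\<in>GV k l. match_adj l f (i,True,j) u} = {(Suc i mod l, False, f i j)}"
proof -
  have "f i j < k" using assms bij_betw_apply by fastforce
  moreover have "l > 0" using assms by auto
  ultimately show ?thesis using assms by (auto simp: match_adj_def GV_def)
qed

lemma mate_False:
  assumes "i < l" "j < k" "bij_betw (f ((i + l - 1) mod l)) {..<k} {..<k}"
  shows "{u\<in>GV k l. match_adj l f (i,False,j) u} =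
     {((i + l - 1) mod l, True, the_inv_into {..<k} (f ((i + l - 1) mod l)) j)}"
    (is "?A = {(?p, True, ?b)}")
proof -
  have lp: "l > 0" using assms by auto
  have p: "?p < l" using lp by auto
  have b: "?b < k" "f ?p ?b = j"
    using assms the_inv_into_into[of "f ?p" "{..<k}" j "{..<k}"] f_the_inv_into_f_bij_betw[of "f ?p" "{..<k}" "{..<k}" j]
    by (auto simp: bij_betw_def)
  show ?thesis
  proof (intro equalityI subsetI)
    fix u assume "u \<in> ?A"
    then obtain a c where u: "u = (a, True, c)" "Suc a mod l = i" "f a c = j" "a < l" "c < k"
      by (auto simp: match_adj_def GV_def)
    have "a = ?p" using pred_mod u by blast
    moreover have "c = ?b" using u b assms \<open>a = ?p\<close>
      by (metis bij_betw_def inj_on_def lessThan_iff)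
    ultimately show "u \<in> {(?p, True, ?b)}" using u by simp
  next
    fix u assume "u \<in> {(?p, True, ?b)}"
    then show "u \<in> ?A" using p b suc_pred_mod[OF assms(1)]
      by (auto simp: match_adj_def GV_def intro!: exI[of _ ?p] exI[of _ ?b])
  qed
qed


lemma clique_nbrs:
  assumes "v \<in> GV k l"
  shows "{u\<in>GV k l. clique_adj v u} = ({fst v} \<times> (UNIV \<times> {..<k})) - {v}"
  using assms by (auto simp: clique_adj_def GV_def)

lemma card_clique_nbrs:
  assumes "v \<in> GV k l"
  shows "card {u\<in>GV k l. clique_adj v u} = 2 * k - 1"
proof -
  have "v \<in> {fst v} \<times> (UNIV \<times> {..<k})" using assms by (auto simp: GV_def)
  then show ?thesis unfolding clique_nbrs[OF assms]
    by (simp add: card_cartesian_product)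
qed

definition mate :: "nat \<Rightarrow> nat \<Rightarrow> (nat \<Rightarrow> nat \<Rightarrow> nat) \<Rightarrow> nat \<times> bool \<times> nat \<Rightarrow> nat \<times> bool \<times> nat" where
  "mate k l f v = (case v of (i, s, j) \<Rightarrow> if s then (Suc i mod l, False, f i j)
      else ((i + l - 1) mod l, True, the_inv_into {..<k} (f ((i + l - 1) mod l)) j))"

lemma match_nbrs:
  assumes "v \<in> GV k l" "\<forall>i<l. bij_betw (f i) {..<k} {..<k}"
  shows "{u\<in>GV k l. match_adj l f v u} = {mate k l f v}"
proof -
  obtain i s j where v: "v = (i,s,j)" "i < l" "j < k" using assms by (auto simp: GV_def)
  have lp: "l > 0" using v by auto
  show ?thesis
  proof (cases s)
    case True then show ?thesis using mate_True[of i l j k f] v assms by (simp add: mate_def)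
  next
    case False then show ?thesis using mate_False[of i l j k f] v assms lp by (simp add: mate_def)
  qed
qed

lemma mate_props:
  assumes "v \<in> GV k l" "\<forall>i<l. bij_betw (f i) {..<k} {..<k}" "l \<ge> 2"
  shows "mate k l f v \<in> GV k l" "fst (mate k l f v) \<noteq> fst v"
proof -
  have "mate k l f v \<in> {u\<in>GV k l. match_adj l f v u}" using match_nbrs[OF assms(1,2)] by simp
  then have m: "mate k l f v \<in> GV k l" "match_adj l f v (mate k l f v)" by auto
  then show "mate k l f v \<in> GV k l" by simp
  obtain i s j where v: "v = (i,s,j)" "i < l" using assms by (auto simp: GV_def)
  have ne: "Suc a mod l \<noteq> a" if "a < l" for a
    using that assms(3) by (cases "Suc a = l") auto
  have "fst (mate k l f v) = Suc (fst v) mod l \<or> fst v = Suc (fst (mate k l f v)) mod l"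
    using m(2) by (auto simp: match_adj_def)
  moreover have "fst v < l" "fst (mate k l f v) < l" using v m(1) by (auto simp: GV_def)
  ultimately show "fst (mate k l f v) \<noteq> fst v" using ne by metis
qed

lemma mate_diff:
  assumes "v \<in> GV k l" "\<forall>i<l. bij_betw (\<sigma> i) {..<k} {..<k}" "\<forall>i<l. bij_betw (\<tau> i) {..<k} {..<k}"
    "\<forall>i<l. \<forall>j<k. \<tau> i j \<noteq> \<sigma> i j"
  shows "mate k l \<sigma> v \<noteq> mate k l \<tau> v"
proof -
  obtain i s j where v: "v = (i,s,j)" "i < l" "j < k" using assms by (auto simp: GV_def)
  have lp: "l > 0" using v by auto
  show ?thesis
  proof (cases s)
    case True
    have "\<tau> i j \<noteq> \<sigma> i j" using v assms(4) by blast
    then show ?thesis using True v by (auto simp: mate_def)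
  next
    case False
    define p where "p = (i + l - 1) mod l"
    have p: "p < l" using lp by (simp add: p_def)
    have bs: "the_inv_into {..<k} (\<sigma> p) j < k" "\<sigma> p (the_inv_into {..<k} (\<sigma> p) j) = j"
      using assms p v the_inv_into_into[of "\<sigma> p" "{..<k}" j "{..<k}"] f_the_inv_into_f_bij_betw[of "\<sigma> p" "{..<k}" "{..<k}" j]
      by (auto simp: bij_betw_def)
    have bt: "\<tau> p (the_inv_into {..<k} (\<tau> p) j) = j"
      using assms p v f_the_inv_into_f_bij_betw[of "\<tau> p" "{..<k}" "{..<k}" j]
      by (auto simp: bij_betw_def)
    have e1: "mate k l \<sigma> v = (p, True, the_inv_into {..<k} (\<sigma> p) j)"
      by (simp add: mate_def v(1) False p_def)
    have e2: "mate k l \<tau> v = (p, True, the_inv_into {..<k} (\<tau> p) j)"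
      by (simp add: mate_def v(1) False p_def)
    show ?thesis
    proof
      assume "mate k l \<sigma> v = mate k l \<tau> v"
      then have "the_inv_into {..<k} (\<sigma> p) j = the_inv_into {..<k} (\<tau> p) j" using e1 e2 by simp
      then show False using bs bt assms(4) p by metis
    qed
  qed
qed

lemma regular_G:
  assumes "\<forall>i<l. bij_betw (\<sigma> i) {..<k} {..<k}" "l \<ge> 2" "k \<ge> 1"
  shows "regular (GV k l) (G_adj l \<sigma>) (2 * k)"
  unfolding regular_def
proof
  fix v assume v: "v \<in> GV k l"
  have "{u\<in>GV k l. G_adj l \<sigma> v u} = {u\<in>GV k l. clique_adj v u} \<union> {mate k l \<sigma> v}"
    using match_nbrs[OF v assms(1)] by (auto simp: G_adj_def)
  moreover have "mate k l \<sigma> v \<notin> {u\<in>GV k l. clique_adj v u}"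
    using mate_props[OF v assms(1,2)] by (auto simp: clique_adj_def)
  moreover have "finite {u\<in>GV k l. clique_adj v u}" using finite_GV by simp
  ultimately show "card {u\<in>GV k l. G_adj l \<sigma> v u} = 2 * k"
    using card_clique_nbrs[OF v] assms(3) by simp
qed

lemma regular_G':
  assumes "\<forall>i<l. bij_betw (\<sigma> i) {..<k} {..<k}" "\<forall>i<l. bij_betw (\<tau> i) {..<k} {..<k}"
    "\<forall>i<l. \<forall>j<k. \<tau> i j \<noteq> \<sigma> i j" "l \<ge> 2" "k \<ge> 1"
  shows "regular (GV k l) (G'_adj l \<sigma> \<tau>) (2 * k + 1)"
  unfolding regular_def
proof
  fix v assume v: "v \<in> GV k l"
  have "{u\<in>GV k l. G'_adj l \<sigma> \<tau> v u} = ({u\<in>GV k l. clique_adj v u} \<union> {mate k l \<sigma> v}) \<union> {mate k l \<tau> v}"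
    using match_nbrs[OF v assms(1)] match_nbrs[OF v assms(2)] by (auto simp: G'_adj_def G_adj_def)
  moreover have "mate k l \<sigma> v \<notin> {u\<in>GV k l. clique_adj v u}"
    using mate_props[OF v assms(1,4)] by (auto simp: clique_adj_def)
  moreover have "mate k l \<tau> v \<notin> {u\<in>GV k l. clique_adj v u} \<union> {mate k l \<sigma> v}"
    using mate_props[OF v assms(2,4)] mate_diff[OF v assms(1-3)] by (auto simp: clique_adj_def)
  moreover have "finite {u\<in>GV k l. clique_adj v u}" using finite_GV by simp
  ultimately show "card {u\<in>GV k l. G'_adj l \<sigma> \<tau> v u} = 2 * k + 1"
    using card_clique_nbrs[OF v] assms(5) by simp
qed


locale gr =
  fixes k l :: nat and E :: "nat \<times> bool \<times> nat \<Rightarrow> nat \<times> bool \<times> nat \<Rightarrow> bool"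
  assumes cl: "\<And>u v. u \<noteq> v \<Longrightarrow> fst u = fst v \<Longrightarrow> E u v"
  and sd: "\<And>u v. E u v \<Longrightarrow> fst u = fst v \<or> fst (snd u) \<noteq> fst (snd v)"
  and k2: "k \<ge> 2"
  and irr: "\<And>u. \<not> E u u"
begin

lemma indep_le: assumes "indep_set (GV k l) E S" shows "card S \<le> l"
proof -
  have S: "S \<subseteq> GV k l" "\<forall>x\<in>S. \<forall>y\<in>S. \<not> E x y" using assms by (auto simp: indep_set_def)
  have "inj_on fst S"
  proof (rule inj_onI)
    fix x y assume "x \<in> S" "y \<in> S" "fst x = fst y"
    then show "x = y" using S(2) cl by blast
  qed
  moreover have "fst ` S \<subseteq> {..<l}" using S(1) by (auto simp: GV_def)
  ultimately show ?thesis by (metis card_inj_on_le card_lessThan finite_lessThan)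
qed

lemma fiber_le: assumes "dissoc_set (GV k l) E D" shows "card {x\<in>D. fst x = i} \<le> 2"
proof (rule ccontr)
  let ?F = "{x\<in>D. fst x = i}"
  assume "\<not> ?thesis"
  then have c: "card ?F \<ge> 3" by simp
  have D: "D \<subseteq> GV k l" "\<forall>x\<in>D. card {y\<in>D. E x y} \<le> 1" using assms by (auto simp: dissoc_set_def)
  have fD: "finite D" using D(1) finite_GV finite_subset by blast
  have "?F \<noteq> {}" using c by (intro notI) simp
  then obtain x where x: "x \<in> ?F" by blast
  have "?F - {x} \<subseteq> {y\<in>D. E x y}"
  proof
    fix y assume "y \<in> ?F - {x}"
    then have "y \<in> D" "y \<noteq> x" "fst y = fst x" using x by auto
    then show "y \<in> {y\<in>D. E x y}" using cl[of x y] by auto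
  qed
  moreover have "card (?F - {x}) \<ge> 2" using c x fD by (simp add: card_Diff_singleton)
  moreover have "finite {y\<in>D. E x y}" using fD by simp
  ultimately have "card {y\<in>D. E x y} \<ge> 2" by (meson card_mono le_trans)
  then show False using D(2) x by force
qed

lemma dissoc_le: assumes "dissoc_set (GV k l) E D" shows "card D \<le> 2 * l"
proof -
  have D: "D \<subseteq> GV k l" using assms by (auto simp: dissoc_set_def)
  have "D = (\<Union>i\<in>{..<l}. {x\<in>D. fst x = i})" using D by (auto simp: GV_def)
  then have "card D \<le> (\<Sum>i\<in>{..<l}. card {x\<in>D. fst x = i})" using card_UN_le[of "{..<l}" "\<lambda>i. {x\<in>D. fst x = i}"] by simp
  also have "\<dots> \<le> (\<Sum>i\<in>{..<l}. 2)" by (rule sum_mono) (use fiber_le[OF assms] in auto)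
  finally show ?thesis by simp
qed

definition I0 :: "(nat \<times> bool \<times> nat) set" where "I0 = {(i, False, 0) | i. i < l}"
definition D0 :: "(nat \<times> bool \<times> nat) set" where "D0 = {(i, False, j) | i j. i < l \<and> j < 2}"

lemma I0: "indep_set (GV k l) E I0" "card I0 = l"
proof -
  show "indep_set (GV k l) E I0" unfolding indep_set_def
  proof
    show "I0 \<subseteq> GV k l" using k2 by (auto simp: I0_def GV_def)
    show "\<forall>x\<in>I0. \<forall>y\<in>I0. \<not> E x y"
    proof (intro ballI notI)
      fix x y assume "x \<in> I0" "y \<in> I0" "E x y"
      then obtain i i' where "x = (i,False,0)" "y = (i',False,0)" by (auto simp: I0_def)
      then show False using sd[OF \<open>E x y\<close>] irr \<open>E x y\<close> by auto
    qed
  qed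
  have eq: "I0 = (\<lambda>i. (i, False, 0::nat)) ` {..<l}" by (auto simp: I0_def)
  show "card I0 = l" unfolding eq by (simp add: card_image inj_on_def)
qed

lemma D0: "dissoc_set (GV k l) E D0" "card D0 = 2 * l"
proof -
  have eq: "D0 = {..<l} \<times> ({False} \<times> {..<2::nat})" by (auto simp: D0_def)
  show "card D0 = 2 * l" unfolding eq by (simp add: card_cartesian_product)
  have sub: "D0 \<subseteq> GV k l" using k2 by (auto simp: D0_def GV_def)
  have "card {y\<in>D0. E x y} \<le> 1" if x: "x \<in> D0" for x
  proof -
    obtain i j where xi: "x = (i, False, j)" "i < l" "j < 2" using x by (auto simp: D0_def)
    have "{y\<in>D0. E x y} \<subseteq> {(i, False, 1 - j)}"
    proof
      fix y assume y: "y \<in> {y\<in>D0. E x y}"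
      then obtain i' j' where yi: "y = (i', False, j')" "i' < l" "j' < 2" by (auto simp: D0_def)
      have "E x y" using y by simp
      then have "i' = i" using sd[OF \<open>E x y\<close>] xi yi by simp
      moreover have "x \<noteq> y" using \<open>E x y\<close> irr by metis
      ultimately show "y \<in> {(i, False, 1 - j)}" using xi yi by auto
    qed
    then have "card {y\<in>D0. E x y} \<le> card {(i, False, 1 - j)}" by (intro card_mono) auto
    then show ?thesis by simp
  qed
  then show "dissoc_set (GV k l) E D0" using sub by (simp add: dissoc_set_def)
qed

lemma alpha_eq: "alpha (GV k l) E = l"
  unfolding alpha_def
proof (rule Max_eqI)
  show "finite {card S |S. indep_set (GV k l) E S}"
    by (rule finite_subset[of _ "{..l}"]) (auto dest: indep_le)
next
  show "\<And>y. y \<in> {card S |S. indep_set (GV k l) E S} \<Longrightarrow> y \<le> l" using indep_le by auto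
  show "l \<in> {card S |S. indep_set (GV k l) E S}" using I0 by (metis (mono_tags, lifting) mem_Collect_eq)
qed

lemma diss_eq: "diss (GV k l) E = 2 * l"
  unfolding diss_def
proof (rule Max_eqI)
  show "finite {card S |S. dissoc_set (GV k l) E S}"
    by (rule finite_subset[of _ "{..2*l}"]) (auto dest: dissoc_le)
next
  show "\<And>y. y \<in> {card S |S. dissoc_set (GV k l) E S} \<Longrightarrow> y \<le> 2 * l" using dissoc_le by auto
  show "2 * l \<in> {card S |S. dissoc_set (GV k l) E S}" using D0 by (metis (mono_tags, lifting) mem_Collect_eq)
qed

end

lemma gr_G: "k \<ge> 2 \<Longrightarrow> gr k (G_adj l \<sigma>)"
  by unfold_locales (auto simp: G_adj_def clique_adj_def match_adj_def)

lemma gr_G': "k \<ge> 2 \<Longrightarrow> gr k (G'_adj l \<sigma> \<tau>)"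
  by unfold_locales (auto simp: G'_adj_def G_adj_def clique_adj_def match_adj_def)


lemma rtranclp_sym:
  assumes "\<And>x y. R x y \<Longrightarrow> R y x" "R\<^sup>*\<^sup>* a b" shows "R\<^sup>*\<^sup>* b a"
  using assms(2)
proof (induction rule: rtranclp_induct)
  case base then show ?case by simp
next
  case (step y z) then show ?case using assms(1) by (meson converse_rtranclp_into_rtranclp)
qed

lemma conn:
  fixes E :: "nat \<times> bool \<times> nat \<Rightarrow> nat \<times> bool \<times> nat \<Rightarrow> bool"
  assumes bij: "\<forall>i<l. bij_betw (\<sigma> i) {..<k} {..<k}" and l2: "l \<ge> 2" and k1: "k \<ge> 1"
    and sub: "\<And>u v. G_adj l \<sigma> u v \<Longrightarrow> E u v"
    and sym: "\<And>u v. E u v \<Longrightarrow> E v u"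
  shows "connected_graph (GV k l) E"
proof -
  define R where "R = (\<lambda>x y. x \<in> GV k l \<and> y \<in> GV k l \<and> E x y)"
  have inside: "R\<^sup>*\<^sup>* (i,s,j) (i,s',j')" if "i < l" "j < k" "j' < k" for i s j s' j'
  proof (cases "(i,s,j) = (i,s',j')")
    case True then show ?thesis by simp
  next
    case False
    then have "R (i,s,j) (i,s',j')" using that sub unfolding R_def
      by (auto simp: GV_def G_adj_def clique_adj_def)
    then show ?thesis by simp
  qed
  let ?c = "(0::nat, False, 0::nat)"
  have reach: "\<forall>s j. j < k \<longrightarrow> R\<^sup>*\<^sup>* ?c (i,s,j)" if "i < l" for i
    using that
  proof (induction i)
    case 0 then show ?case using inside k1 by auto
  next
    case (Suc i)
    then have il: "i < l" by simp
    have a: "R\<^sup>*\<^sup>* ?c (i,True,0)" using Suc k1 by auto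
    have sk: "\<sigma> i 0 < k" using bij il k1 bij_betw_apply by fastforce
    have m: "Suc i mod l = Suc i" using Suc.prems by simp
    have "R (i,True,0) (Suc i, False, \<sigma> i 0)" unfolding R_def using il Suc.prems k1 sk sub m
      by (auto simp: GV_def G_adj_def match_adj_def)
    then have b: "R\<^sup>*\<^sup>* ?c (Suc i, False, \<sigma> i 0)" using a by (meson rtranclp.rtrancl_into_rtrancl)
    show ?case
    proof (intro allI impI)
      fix s j assume "j < k"
      then show "R\<^sup>*\<^sup>* ?c (Suc i, s, j)" using b inside[OF Suc.prems sk \<open>j<k\<close>] by (meson rtranclp_trans)
    qed
  qed
  have symR: "R x y \<Longrightarrow> R y x" for x y using sym unfolding R_def by blast
  have all: "R\<^sup>*\<^sup>* ?c v" if "v \<in> GV k l" for v using that reach by (auto simp: GV_def)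
  have "R\<^sup>*\<^sup>* u v" if "u \<in> GV k l" "v \<in> GV k l" for u v
    using rtranclp_sym[of R, OF symR all[OF that(1)]] all[OF that(2)] by (meson rtranclp_trans)
  moreover have "(0, False, 0) \<in> GV k l" using k1 l2 by (auto simp: GV_def)
  then have "GV k l \<noteq> {}" by blast
  ultimately show ?thesis unfolding connected_graph_def R_def by blast
qed

theorem mainTheorem8:
  fixes k l :: nat and \<sigma> \<tau> :: "nat \<Rightarrow> nat \<Rightarrow> nat"
  assumes "k \<ge> 2" and "l \<ge> 2"
    and "\<forall>i<l. bij_betw (\<sigma> i) {..<k} {..<k}"
    and "\<forall>i<l. bij_betw (\<tau> i) {..<k} {..<k}"
    and "\<forall>i<l. \<forall>j<k. \<tau> i j \<noteq> \<sigma> i j"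
  shows "connected_graph (GV k l) (G_adj l \<sigma>) \<and> regular (GV k l) (G_adj l \<sigma>) (2 * k) \<and>
         2 * alpha (GV k l) (G_adj l \<sigma>) = diss (GV k l) (G_adj l \<sigma>) \<and>
         diss (GV k l) (G_adj l \<sigma>) = 2 * l \<and>
         connected_graph (GV k l) (G'_adj l \<sigma> \<tau>) \<and> regular (GV k l) (G'_adj l \<sigma> \<tau>) (2 * k + 1) \<and>
         2 * alpha (GV k l) (G'_adj l \<sigma> \<tau>) = diss (GV k l) (G'_adj l \<sigma> \<tau>) \<and>
         diss (GV k l) (G'_adj l \<sigma> \<tau>) = 2 * l"
proof -
  have k1: "k \<ge> 1" using assms(1) by simp
  have symG: "G_adj l \<sigma> u v \<Longrightarrow> G_adj l \<sigma> v u" for u v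
    by (auto simp: G_adj_def clique_adj_def match_adj_def)
  have symG': "G'_adj l \<sigma> \<tau> u v \<Longrightarrow> G'_adj l \<sigma> \<tau> v u" for u v
    by (auto simp: G'_adj_def G_adj_def clique_adj_def match_adj_def)
  have c1: "connected_graph (GV k l) (G_adj l \<sigma>)" by (rule conn[OF assms(3,2) k1]) (auto intro: symG)
  have c2: "connected_graph (GV k l) (G'_adj l \<sigma> \<tau>)"
  proof (rule conn[OF assms(3,2) k1])
    show "G_adj l \<sigma> u v \<Longrightarrow> G'_adj l \<sigma> \<tau> u v" for u v by (simp add: G'_adj_def)
  qed (rule symG')
  interpret g1: gr k l "G_adj l \<sigma>" by (rule gr_G[OF assms(1)])
  interpret g2: gr k l "G'_adj l \<sigma> \<tau>" by (rule gr_G'[OF assms(1)])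
  show ?thesis using c1 c2 regular_G[OF assms(3,2) k1] regular_G'[OF assms(3-5,2) k1]
      g1.alpha_eq g1.diss_eq g2.alpha_eq g2.diss_eq by simp
qed

end
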